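(* Let $\mathbf{w}_1,\dots,\mathbf{w}_6:\mathbb{R}\to\mathbb{R}^7$ be differentiable functions satisfying $$\tfrac{d\mathbf{w}_1}{dt}=2\mathbf{w}_2\times\mathbf{w}_3,\quad \tfrac{d\mathbf{w}_2}{dt}=2\mathbf{w}_1\times\mathbf{w}_3,\quad \tfrac{d\mathbf{w}_3}{dt}=-2\mathbf{w}_1\times\mathbf{w}_2,$$ $$\tfrac{d\mathbf{w}_4}{dt}=\mathbf{w}_1\times\mathbf{w}_5+\mathbf{w}_2\times\mathbf{w}_5-\mathbf{w}_3\times\mathbf{w}_4,\quad \tfrac{d\mathbf{w}_5}{dt}=-\mathbf{w}_1\times\mathbf{w}_4+\mathbf{w}_2\times\mathbf{w}_4+\mathbf{w}_3\times\mathbf{w}_5,\quad \tfrac{d\mathbf{w}_6}{dt}=\mathbf{w}_4\times\mathbf{w}_5 .$$ Then $$M=\Big\{\tfrac12(y_1^2+y_2^2)\mathbf{w}_1(t)+\tfrac12(y_1^2-y_2^2)\mathbf{w}_2(t)+y_1y_2\mathbf{w}_3(t)+y_1\mathbf{w}_4(t)+y_2\mathbf{w}_5(t)+\mathbf{w}_6(t):y_1,y_2,t\in\mathbb{R}\Big\}$$ is an associative 3-fold in $\mathbb{R}^7$ wherever it is nonsingular.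
   Context: Let $(x_1,\dots,x_7)$ be coordinates on $\mathbb{R}^7$ with Euclidean metric $g$, and write $dx_{ijk}=dx_i\wedge dx_j\wedge dx_k$. Define $\varphi=dx_{123}+dx_{145}+dx_{167}+dx_{246}-dx_{257}-dx_{347}-dx_{356}$. The cross product $\times$ on $\mathbb{R}^7$ is defined by $g(u\times v,w)=\varphi(u,v,w)$ for all $u,v,w\in\mathbb{R}^7$. An oriented 3-dimensional (immersed) submanifold $N\subseteq\mathbb{R}^7$ is an associative 3-fold if $\varphi|_{T_xN}=\mathrm{vol}_{T_xN}$ for all $x\in N$. *)

theory Defs
  imports "HOL-Analysis.Analysis"
begin

text \<open>Euclidean R^7 is \<open>real^7\<close>; coordinate x_i is \<open>x $ i\<close> for i = 1..7
  (the seven numerals 1,...,7 denote the seven distinct elements of the index type 7).\<close>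

definition dx :: "7 \<Rightarrow> 7 \<Rightarrow> 7 \<Rightarrow> real^7 \<Rightarrow> real^7 \<Rightarrow> real^7 \<Rightarrow> real" where
  "dx i j k u v w =
     u$i * (v$j * w$k - v$k * w$j)
   - u$j * (v$i * w$k - v$k * w$i)
   + u$k * (v$i * w$j - v$j * w$i)"

definition phi :: "real^7 \<Rightarrow> real^7 \<Rightarrow> real^7 \<Rightarrow> real" where
  "phi u v w = dx 1 2 3 u v w + dx 1 4 5 u v w + dx 1 6 7 u v w + dx 2 4 6 u v w
              - dx 2 5 7 u v w - dx 3 4 7 u v w - dx 3 5 6 u v w"

text \<open>Cross product: g(u \<times> v, w) = phi(u,v,w).\<close>
definition cross7 :: "real^7 \<Rightarrow> real^7 \<Rightarrow> real^7" (infixl "\<times>\<^sub>7" 70) where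
  "cross7 u v = (\<chi> k. phi u v (axis k 1))"

text \<open>Gram determinant of three vectors = squared 3-volume of the parallelepiped.\<close>
definition gram3 :: "real^7 \<Rightarrow> real^7 \<Rightarrow> real^7 \<Rightarrow> real" where
  "gram3 u v w =
     (u\<bullet>u) * ((v\<bullet>v) * (w\<bullet>w) - (v\<bullet>w) * (w\<bullet>v))
   - (u\<bullet>v) * ((v\<bullet>u) * (w\<bullet>w) - (v\<bullet>w) * (w\<bullet>u))
   + (u\<bullet>w) * ((v\<bullet>u) * (w\<bullet>v) - (v\<bullet>v) * (w\<bullet>u))"

text \<open>The 3-plane spanned by linearly independent u, v, w is associative (for a suitable
  orientation): phi restricted to it equals the volume form, i.e.
  phi(u,v,w) = +- vol(u,v,w) = +- sqrt(gram).\<close>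
definition associative_plane :: "real^7 \<Rightarrow> real^7 \<Rightarrow> real^7 \<Rightarrow> bool" where
  "associative_plane u v w \<longleftrightarrow> \<bar>phi u v w\<bar> = sqrt (gram3 u v w)"

end

theory Submission imports Defs begin

lemma UNIV7: "(UNIV::7 set) = {1,2,3,4,5,6,7}"
proof -
  have "card {1::7,2,3,4,5,6,7} = 7" by simp
  then show ?thesis using card_subset_eq[of "UNIV::7 set" "{1,2,3,4,5,6,7}"] by simp
qed

lemma all7: "(\<forall>k::7. P k) \<longleftrightarrow> P 1 \<and> P 2 \<and> P 3 \<and> P 4 \<and> P 5 \<and> P 6 \<and> P 7"
  by (metis UNIV7 UNIV_I insertE empty_iff)

lemma inner7: "(x::real^7) \<bullet> y = x$1*y$1 + x$2*y$2 + x$3*y$3 + x$4*y$4 + x$5*y$5 + x$6*y$6 + x$7*y$7"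
  unfolding inner_vec_def UNIV7 by simp

lemma cross_comp: "(u \<times>\<^sub>7 v) $ k = phi u v (axis k 1)"
  by (simp add: cross7_def)

lemmas ex = cross_comp phi_def dx_def axis_def inner7

lemma L1: "phi u v w = (u \<times>\<^sub>7 v) \<bullet> w"
  by (simp add: ex) algebra

lemma L4: "(u \<times>\<^sub>7 v) \<bullet> (u \<times>\<^sub>7 v) = (u\<bullet>u)*(v\<bullet>v) - (u\<bullet>v)^2"
  by (simp add: ex) algebra

lemma L2: "(u \<times>\<^sub>7 v) \<bullet> u = 0"
  by (simp add: ex) algebra
lemma L3: "(u \<times>\<^sub>7 v) \<bullet> v = 0"
  by (simp add: ex) algebra


lemma assoc_cross: "associative_plane u v (u \<times>\<^sub>7 v)"
proof -
  define c where "c = u \<times>\<^sub>7 v"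
  have h: "(u\<bullet>u)*(v\<bullet>v) = (u\<bullet>v)^2 + c\<bullet>c" using L4[of u v] unfolding c_def by simp
  have cu: "c \<bullet> u = 0" "u \<bullet> c = 0" using L2[of u v] unfolding c_def by (simp_all add: inner_commute)
  have cv: "c \<bullet> v = 0" "v \<bullet> c = 0" using L3[of u v] unfolding c_def by (simp_all add: inner_commute)
  have "gram3 u v c = (u\<bullet>u)*((v\<bullet>v)*(c\<bullet>c)) - (u\<bullet>v)*((v\<bullet>u)*(c\<bullet>c))"
    unfolding gram3_def cu cv by simp
  also have "\<dots> = (c\<bullet>c)*((u\<bullet>u)*(v\<bullet>v) - (u\<bullet>v)^2)"
    by (simp add: inner_commute[of v u] power2_eq_square algebra_simps)
  also have "\<dots> = (c\<bullet>c)^2" unfolding h by (simp add: power2_eq_square)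
  finally have g: "gram3 u v c = (c\<bullet>c)^2" .
  have "phi u v c = c \<bullet> c" unfolding L1 c_def ..
  then show ?thesis unfolding associative_plane_def c_def[symmetric] g by simp
qed

lemma vd_comp:
  assumes "\<And>t. (w has_vector_derivative w' t) (at t)" "(g has_derivative g') (at x)"
  shows "((\<lambda>x. w (g x)) has_derivative (\<lambda>h. g' h *\<^sub>R w' (g x))) (at x)"
proof -
  have "(w has_derivative (\<lambda>h. h *\<^sub>R w' (g x))) (at (g x))"
    using assms(1) by (simp add: has_vector_derivative_def)
  from has_derivative_compose[OF assms(2) this] show ?thesis .
qed

lemma derivF:
  fixes w1 w2 w3 w4 w5 w6 :: "real \<Rightarrow> 'a::real_normed_vector"
  assumes d1: "\<And>t. (w1 has_vector_derivative W1 t) (at t)"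
      and d2: "\<And>t. (w2 has_vector_derivative W2 t) (at t)"
      and d3: "\<And>t. (w3 has_vector_derivative W3 t) (at t)"
      and d4: "\<And>t. (w4 has_vector_derivative W4 t) (at t)"
      and d5: "\<And>t. (w5 has_vector_derivative W5 t) (at t)"
      and d6: "\<And>t. (w6 has_vector_derivative W6 t) (at t)"
  shows "((\<lambda>(y1::real, y2::real, t::real).
              (1/2 * (y1\<^sup>2 + y2\<^sup>2)) *\<^sub>R w1 t + (1/2 * (y1\<^sup>2 - y2\<^sup>2)) *\<^sub>R w2 t
              + (y1 * y2) *\<^sub>R w3 t + y1 *\<^sub>R w4 t + y2 *\<^sub>R w5 t + w6 t) has_derivative
   (\<lambda>(a,b,c). a *\<^sub>R (y1 *\<^sub>R w1 t + y1 *\<^sub>R w2 t + y2 *\<^sub>R w3 t + w4 t)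
            + b *\<^sub>R (y2 *\<^sub>R w1 t - y2 *\<^sub>R w2 t + y1 *\<^sub>R w3 t + w5 t)
            + c *\<^sub>R ((1/2 * (y1\<^sup>2 + y2\<^sup>2)) *\<^sub>R W1 t + (1/2 * (y1\<^sup>2 - y2\<^sup>2)) *\<^sub>R W2 t
              + (y1 * y2) *\<^sub>R W3 t + y1 *\<^sub>R W4 t + y2 *\<^sub>R W5 t + W6 t))) (at (y1,y2,t))"
proof -
  let ?p = "(y1,y2,t)"
  have Feq: "(\<lambda>(y1::real, y2::real, t::real).
              (1/2 * (y1\<^sup>2 + y2\<^sup>2)) *\<^sub>R w1 t + (1/2 * (y1\<^sup>2 - y2\<^sup>2)) *\<^sub>R w2 t
              + (y1 * y2) *\<^sub>R w3 t + y1 *\<^sub>R w4 t + y2 *\<^sub>R w5 t + w6 t) = (\<lambda>x. (1/2 * ((fst x)\<^sup>2 + (fst (snd x))\<^sup>2)) *\<^sub>R w1 (snd (snd x))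
        + (1/2 * ((fst x)\<^sup>2 - (fst (snd x))\<^sup>2)) *\<^sub>R w2 (snd (snd x))
        + (fst x * fst (snd x)) *\<^sub>R w3 (snd (snd x)) + fst x *\<^sub>R w4 (snd (snd x))
        + fst (snd x) *\<^sub>R w5 (snd (snd x)) + w6 (snd (snd x)))"
    by (auto simp: fun_eq_iff)
  have s: "((\<lambda>x::real\<times>real\<times>real. snd (snd x)) has_derivative (\<lambda>h. snd (snd h))) (at ?p)"
    by (auto intro!: derivative_eq_intros)
  have f1: "((\<lambda>x::real\<times>real\<times>real. fst x) has_derivative (\<lambda>h. fst h)) (at ?p)"
    by (auto intro!: derivative_eq_intros)
  have f2: "((\<lambda>x::real\<times>real\<times>real. fst (snd x)) has_derivative (\<lambda>h. fst (snd h))) (at ?p)"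
    by (auto intro!: derivative_eq_intros)
  have sq1: "((\<lambda>x::real\<times>real\<times>real. (fst x)\<^sup>2) has_derivative (\<lambda>h. 2 * y1 * fst h)) (at ?p)"
    using has_derivative_mult[OF f1 f1] by (simp add: power2_eq_square algebra_simps)
  have sq2: "((\<lambda>x::real\<times>real\<times>real. (fst (snd x))\<^sup>2) has_derivative (\<lambda>h. 2 * y2 * fst (snd h))) (at ?p)"
    using has_derivative_mult[OF f2 f2] by (simp add: power2_eq_square algebra_simps)
  have pr: "((\<lambda>x::real\<times>real\<times>real. fst x * fst (snd x)) has_derivative (\<lambda>h. y1 * fst (snd h) + fst h * y2)) (at ?p)"
    using has_derivative_mult[OF f1 f2] by simp
  note v1 = vd_comp[OF d1 s] and v2 = vd_comp[OF d2 s] and v3 = vd_comp[OF d3 s]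
    and v4 = vd_comp[OF d4 s] and v5 = vd_comp[OF d5 s] and v6 = vd_comp[OF d6 s]
  have c1: "((\<lambda>x::real\<times>real\<times>real. 1/2 * ((fst x)\<^sup>2 + (fst (snd x))\<^sup>2)) has_derivative (\<lambda>h. 1/2 * (2 * y1 * fst h + 2 * y2 * fst (snd h)))) (at ?p)"
    by (intro has_derivative_mult_right has_derivative_add sq1 sq2)
  have c2: "((\<lambda>x::real\<times>real\<times>real. 1/2 * ((fst x)\<^sup>2 - (fst (snd x))\<^sup>2)) has_derivative (\<lambda>h. 1/2 * (2 * y1 * fst h - 2 * y2 * fst (snd h)))) (at ?p)"
    by (intro has_derivative_mult_right has_derivative_diff sq1 sq2)
  show ?thesis unfolding Feq
    apply (rule has_derivative_eq_rhs)
     apply (rule has_derivative_add has_derivative_scaleR c1 c2 pr f1 f2 v1 v2 v3 v4 v5 v6)+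
    apply (simp add: fun_eq_iff split_beta algebra_simps power2_eq_square)
    done
qed

theorem theorem5p3:
  fixes w1 w2 w3 w4 w5 w6 :: "real \<Rightarrow> real^7"
  assumes d1: "\<And>t. (w1 has_vector_derivative 2 *\<^sub>R (w2 t \<times>\<^sub>7 w3 t)) (at t)"
      and d2: "\<And>t. (w2 has_vector_derivative 2 *\<^sub>R (w1 t \<times>\<^sub>7 w3 t)) (at t)"
      and d3: "\<And>t. (w3 has_vector_derivative - 2 *\<^sub>R (w1 t \<times>\<^sub>7 w2 t)) (at t)"
      and d4: "\<And>t. (w4 has_vector_derivative
                 (w1 t \<times>\<^sub>7 w5 t + w2 t \<times>\<^sub>7 w5 t - w3 t \<times>\<^sub>7 w4 t)) (at t)"
      and d5: "\<And>t. (w5 has_vector_derivative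
                 (- (w1 t \<times>\<^sub>7 w4 t) + w2 t \<times>\<^sub>7 w4 t + w3 t \<times>\<^sub>7 w5 t)) (at t)"
      and d6: "\<And>t. (w6 has_vector_derivative (w4 t \<times>\<^sub>7 w5 t)) (at t)"
  defines "F \<equiv> (\<lambda>(y1::real, y2::real, t::real).
              (1/2 * (y1\<^sup>2 + y2\<^sup>2)) *\<^sub>R w1 t + (1/2 * (y1\<^sup>2 - y2\<^sup>2)) *\<^sub>R w2 t
              + (y1 * y2) *\<^sub>R w3 t + y1 *\<^sub>R w4 t + y2 *\<^sub>R w5 t + w6 t)"
  assumes deriv: "(F has_derivative D) (at p)"
      and nonsing: "inj D"
  shows "associative_plane (D (1, 0, 0)) (D (0, 1, 0)) (D (0, 0, 1))"
proof -
  obtain y1 y2 t where p: "p = (y1, y2, t)" by (cases p) auto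
  define A where "A = y1 *\<^sub>R w1 t + y1 *\<^sub>R w2 t + y2 *\<^sub>R w3 t + w4 t"
  define B where "B = y2 *\<^sub>R w1 t - y2 *\<^sub>R w2 t + y1 *\<^sub>R w3 t + w5 t"
  define C where "C = (1/2 * (y1\<^sup>2 + y2\<^sup>2)) *\<^sub>R (2 *\<^sub>R (w2 t \<times>\<^sub>7 w3 t))
     + (1/2 * (y1\<^sup>2 - y2\<^sup>2)) *\<^sub>R (2 *\<^sub>R (w1 t \<times>\<^sub>7 w3 t))
     + (y1 * y2) *\<^sub>R (- 2 *\<^sub>R (w1 t \<times>\<^sub>7 w2 t))
     + y1 *\<^sub>R (w1 t \<times>\<^sub>7 w5 t + w2 t \<times>\<^sub>7 w5 t - w3 t \<times>\<^sub>7 w4 t)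
     + y2 *\<^sub>R (- (w1 t \<times>\<^sub>7 w4 t) + w2 t \<times>\<^sub>7 w4 t + w3 t \<times>\<^sub>7 w5 t)
     + w4 t \<times>\<^sub>7 w5 t"
  define D0 where "D0 = (\<lambda>(a::real, b::real, c::real). a *\<^sub>R A + b *\<^sub>R B + c *\<^sub>R C)"
  have Fd: "(F has_derivative D0) (at p)"
    using derivF[OF d1 d2 d3 d4 d5 d6, of y1 t y2]
    unfolding F_def p D0_def A_def B_def C_def .
  have DD: "D = D0" using has_derivative_unique[OF deriv Fd] .
  have CAB: "C = A \<times>\<^sub>7 B"
    unfolding vec_eq_iff all7 A_def B_def C_def
    by (simp add: ex) algebra
  have e: "D (1,0,0) = A" "D (0,1,0) = B" "D (0,0,1) = C" by (simp_all add: DD D0_def)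
  show ?thesis unfolding e CAB by (rule assoc_cross)
qed

end
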